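(* Let $\mathcal{T}$ be a triangulation of $C(2d+4,2d+1)$ which is neither the upper triangulation nor the lower triangulation. Let $A$ be the unique mutable $d$-simplex of $\mathcal{T}$ and let $\Sigma$ be the support of $A$ (with respect to $\operatorname{simp}(\mathcal{T})$). Then every internal $d$-simplex $A'$ of $\mathcal{T}$ satisfies $A'\subseteq A\cup\Sigma$.
   Context: $C(V,n)$ is the cyclic polytope on a finite ordered set $V$ (convex hull of $(t_v,\dots,t_v^n)$, $t_v$ increasing); $C(m,n)=C([m],n)$; a triangulation is a set of $(n+1)$-subsets of $V$ whose geometric simplices form a simplicial complex covering $C(V,n)$; its simplices include all faces of its members. Subsets are written increasingly, $A=(a_0,a_1,\dots)$. An $n$-subset $F$ is a lower (upper) facet of $C(V,n)$ iff each $w\in V\setminus F$ has an even (odd) number of elements of $F$ above it; the lower (upper) triangulation of $C(V,n)$ is the set of lower (upper) facets of $C(V,n+1)$. A $(d+1)$-subset of $[m]$ is an internal $d$-simplex of $C(m,2d+1)$ if it lies in no facet; $\nu_{m,d}$ denotes the set of these; $\operatorname{simp}(\mathcal{T})$ is the set of internal $d$-simplices that are faces of simplices of $\mathcal{T}$. For a $d$-subset $\Sigma$ and $(d+1)$-subset $A$, $\Sigma\wr A$ means $a_0<\sigma_0<a_1<\dots<\sigma_{d-1}<a_d$; for a $(d+1)$-subset $A$ and $(d+2)$-subset $B$, $A\wr B$ means $b_0<a_0<b_1<\dots<a_d<b_{d+1}$. $A\in\operatorname{simp}(\mathcal{T})$ is mutable if there is a $(d+2)$-subset $B$ with $A\wr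 B$ such that $\{S\in\mathcal{T}:S\subseteq A\cup B\}$ is the lower triangulation of $C(A\cup B,2d+1)$. A support of $A\in\mathbf{X}\subseteq\nu_{m,d}$ is a $d$-subset $\Sigma$ with $\Sigma\wr A$ such that every $C\in\nu_{m,d}$ with $C\subseteq A\cup\Sigma$ lies in $\mathbf{X}$. *)

theory Defs
  imports Complex_Main
begin

text \<open>Vertex v of V (a finite set of naturals, ordered as naturals) is the point
  (t v, t v^2, ..., t v^n) of R^n, encoded as a function nat => real whose coordinate
  k (k < n) is t v ^ (k+1) and which vanishes for k >= n.\<close>

definition cpt :: "(nat \<Rightarrow> real) \<Rightarrow> nat \<Rightarrow> nat \<Rightarrow> (nat \<Rightarrow> real)" where
  "cpt t n v = (\<lambda>k. if k < n then t v ^ (k + 1) else 0)"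

definition conv :: "(nat \<Rightarrow> real) \<Rightarrow> nat \<Rightarrow> nat set \<Rightarrow> (nat \<Rightarrow> real) set" where
  "conv t n S = {x. \<exists>u::nat \<Rightarrow> real. (\<forall>v\<in>S. 0 \<le> u v) \<and> (\<Sum>v\<in>S. u v) = 1
                     \<and> x = (\<lambda>k. \<Sum>v\<in>S. u v * cpt t n v k)}"

definition triangulation :: "(nat \<Rightarrow> real) \<Rightarrow> nat set \<Rightarrow> nat \<Rightarrow> nat set set \<Rightarrow> bool" where
  "triangulation t V n T \<longleftrightarrow>
     (\<forall>S\<in>T. S \<subseteq> V \<and> card S = n + 1) \<and>
     (\<forall>S\<in>T. \<forall>S'\<in>T. conv t n S \<inter> conv t n S' = conv t n (S \<inter> S')) \<and>
     (\<Union>S\<in>T. conv t n S) = conv t n V"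

definition lower_facet :: "nat set \<Rightarrow> nat \<Rightarrow> nat set \<Rightarrow> bool" where
  "lower_facet V n F \<longleftrightarrow> F \<subseteq> V \<and> card F = n \<and>
     (\<forall>w\<in>V - F. even (card {f\<in>F. w < f}))"

definition upper_facet :: "nat set \<Rightarrow> nat \<Rightarrow> nat set \<Rightarrow> bool" where
  "upper_facet V n F \<longleftrightarrow> F \<subseteq> V \<and> card F = n \<and>
     (\<forall>w\<in>V - F. odd (card {f\<in>F. w < f}))"

definition lower_triangulation :: "nat set \<Rightarrow> nat \<Rightarrow> nat set set" where
  "lower_triangulation V n = {F. lower_facet V (n + 1) F}"

definition upper_triangulation :: "nat set \<Rightarrow> nat \<Rightarrow> nat set set" where
  "upper_triangulation V n = {F. upper_facet V (n + 1) F}"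

definition facet :: "nat set \<Rightarrow> nat \<Rightarrow> nat set \<Rightarrow> bool" where
  "facet V n F \<longleftrightarrow> lower_facet V n F \<or> upper_facet V n F"

definition nu :: "nat \<Rightarrow> nat \<Rightarrow> nat set set" where
  "nu m d = {A. A \<subseteq> {1..m} \<and> card A = d + 1 \<and>
                 \<not> (\<exists>F. facet {1..m} (2 * d + 1) F \<and> A \<subseteq> F)}"

definition simp :: "nat \<Rightarrow> nat \<Rightarrow> nat set set \<Rightarrow> nat set set" where
  "simp m d T = {A \<in> nu m d. \<exists>S\<in>T. A \<subseteq> S}"

text \<open>interlace X Y: card Y = card X + 1 and y0 < x0 < y1 < x1 < ... < xk < y(k+1).
  Both "Sigma wr A" and "A wr B" of the paper are instances of this.\<close>
definition interlace :: "nat set \<Rightarrow> nat set \<Rightarrow> bool" where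
  "interlace X Y \<longleftrightarrow> finite X \<and> finite Y \<and> card Y = card X + 1 \<and>
     (\<forall>i < card X. sorted_list_of_set Y ! i < sorted_list_of_set X ! i \<and>
                   sorted_list_of_set X ! i < sorted_list_of_set Y ! (i + 1))"

definition mutable :: "nat \<Rightarrow> nat \<Rightarrow> nat set set \<Rightarrow> nat set \<Rightarrow> bool" where
  "mutable m d T A \<longleftrightarrow> A \<in> simp m d T \<and>
     (\<exists>B. B \<subseteq> {1..m} \<and> card B = d + 2 \<and> interlace A B \<and>
          {S\<in>T. S \<subseteq> A \<union> B} = lower_triangulation (A \<union> B) (2 * d + 1))"

definition support :: "nat \<Rightarrow> nat \<Rightarrow> nat set set \<Rightarrow> nat set \<Rightarrow> nat set \<Rightarrow> bool" where
  "support m d X A \<Sigma> \<longleftrightarrow> \<Sigma> \<subseteq> {1..m} \<and> card \<Sigma> = d \<and> interlace \<Sigma> A \<and>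
     (\<forall>C\<in>nu m d. C \<subseteq> A \<union> \<Sigma> \<longrightarrow> C \<in> X)"

end

theory Submission
  imports Defs "HOL-Computational_Algebra.Polynomial"
begin

definition PP :: "(nat \<Rightarrow> real) \<Rightarrow> nat set \<Rightarrow> real poly" where
  "PP t S = (\<Prod>u\<in>S. [:- t u, 1:])"

lemma poly_PP: "poly (PP t S) x = (\<Prod>u\<in>S. x - t u)"
  by (simp add: PP_def poly_prod)

lemma degree_PP: "finite S \<Longrightarrow> degree (PP t S) = card S"
  unfolding PP_def by (subst degree_prod_sum_eq) auto

lemma lead_PP: "finite S \<Longrightarrow> coeff (PP t S) (card S) = 1"
proof -
  assume "finite S"
  have "coeff (PP t S) (card S) = lead_coeff (PP t S)" using degree_PP[OF \<open>finite S\<close>] by simp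
  also have "\<dots> = 1" unfolding PP_def lead_coeff_prod by simp
  finally show ?thesis .
qed

lemma poly_upto: "degree (P::real poly) \<le> N \<Longrightarrow> poly P x = (\<Sum>i\<le>N. coeff P i * x ^ i)"
proof -
  assume a: "degree P \<le> N"
  have "poly P x = (\<Sum>i\<le>degree P. coeff P i * x ^ i)" by (rule poly_altdef)
  also have "\<dots> = (\<Sum>i\<le>N. coeff P i * x ^ i)"
    by (rule sum.mono_neutral_left) (use a in \<open>auto simp: coeff_eq_0\<close>)
  finally show ?thesis .
qed

lemma sum_poly_swap:
  fixes t :: "'b \<Rightarrow> real"
  assumes "degree P \<le> N"
  shows "(\<Sum>v\<in>S. f v * poly P (t v)) = (\<Sum>i\<le>N. coeff P i * (\<Sum>v\<in>S. f v * t v ^ i))"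
proof -
  have "(\<Sum>v\<in>S. f v * poly P (t v)) = (\<Sum>v\<in>S. \<Sum>i\<le>N. f v * (coeff P i * t v ^ i))"
    using poly_upto[OF assms] by (simp add: sum_distrib_left)
  also have "\<dots> = (\<Sum>i\<le>N. \<Sum>v\<in>S. f v * (coeff P i * t v ^ i))" by (rule sum.swap)
  also have "\<dots> = (\<Sum>i\<le>N. coeff P i * (\<Sum>v\<in>S. f v * t v ^ i))"
    by (simp add: sum_distrib_left mult_ac)
  finally show ?thesis .
qed

lemma indep:
  fixes t :: "nat \<Rightarrow> real" and \<delta> :: "nat \<Rightarrow> real"
  assumes fin: "finite S" and inj: "inj_on t S" and cS: "card S \<le> Suc N"
    and mom: "\<And>j. j \<le> N \<Longrightarrow> (\<Sum>v\<in>S. \<delta> v * t v ^ j) = 0"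
    and w: "w \<in> S"
  shows "\<delta> w = 0"
proof -
  let ?P = "PP t (S - {w})"
  have deg: "degree ?P \<le> N" using degree_PP[of "S - {w}" t] fin cS w by auto
  have "(\<Sum>v\<in>S. \<delta> v * poly ?P (t v)) = 0"
    using sum_poly_swap[OF deg, of \<delta> t S] mom by simp
  moreover have "(\<Sum>v\<in>S. \<delta> v * poly ?P (t v)) = \<delta> w * poly ?P (t w)"
  proof (rule sum.remove[OF fin w, THEN trans])
    have "\<And>v. v \<in> S - {w} \<Longrightarrow> poly ?P (t v) = 0"
      unfolding poly_PP using fin by (auto intro: prod_zero)
    then show "\<delta> w * poly ?P (t w) + (\<Sum>v\<in>S - {w}. \<delta> v * poly ?P (t v)) = \<delta> w * poly ?P (t w)"
      by simp
  qed
  moreover have "poly ?P (t w) \<noteq> 0"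
    unfolding poly_PP using fin inj w by (auto simp: inj_on_def)
  ultimately show ?thesis by simp
qed

definition ccoef :: "(nat \<Rightarrow> real) \<Rightarrow> nat set \<Rightarrow> nat \<Rightarrow> real" where
  "ccoef t Z v = 1 / (\<Prod>u\<in>Z - {v}. t v - t u)"

lemma circuit:
  fixes t :: "nat \<Rightarrow> real"
  assumes fin: "finite Z" and inj: "inj_on t Z" and cZ: "card Z = Suc (Suc N)"
    and j: "j \<le> N"
  shows "(\<Sum>v\<in>Z. ccoef t Z v * t v ^ j) = 0"
proof -
  define H where "H = (\<Sum>v\<in>Z. smult (ccoef t Z v * t v ^ j) (PP t (Z - {v})))"
  have dH: "degree H \<le> Suc N"
    unfolding H_def
    by (rule degree_sum_le[OF fin]) (use degree_PP[of _ t] fin cZ in \<open>auto intro: order.trans[OF degree_smult_le]\<close>)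
  have pH: "poly H (t w) = t w ^ j" if w: "w \<in> Z" for w
  proof -
    have "poly H (t w) = (\<Sum>v\<in>Z. ccoef t Z v * t v ^ j * (\<Prod>u\<in>Z - {v}. t w - t u))"
      unfolding H_def by (simp add: poly_sum poly_PP)
    also have "\<dots> = ccoef t Z w * t w ^ j * (\<Prod>u\<in>Z - {w}. t w - t u)"
    proof (rule sum.remove[OF fin w, THEN trans])
      have "\<And>v. v \<in> Z - {w} \<Longrightarrow> (\<Prod>u\<in>Z - {v}. t w - t u) = 0"
        using fin w by (auto intro: prod_zero)
      then show "ccoef t Z w * t w ^ j * (\<Prod>u\<in>Z - {w}. t w - t u) +
          (\<Sum>v\<in>Z - {w}. ccoef t Z v * t v ^ j * (\<Prod>u\<in>Z - {v}. t w - t u)) =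
          ccoef t Z w * t w ^ j * (\<Prod>u\<in>Z - {w}. t w - t u)" by simp
    qed
    also have "\<dots> = t w ^ j"
    proof -
      have "(\<Prod>u\<in>Z - {w}. t w - t u) \<noteq> 0" using fin inj w by (auto simp: inj_on_def)
      then show ?thesis unfolding ccoef_def by simp
    qed
    finally show ?thesis .
  qed
  have "H = monom 1 j"
  proof (rule poly_eqI_degree[of "t ` Z"])
    show "\<And>x. x \<in> t ` Z \<Longrightarrow> poly H x = poly (monom 1 j) x"
      using pH by (auto simp: poly_monom)
    show "degree H < card (t ` Z)" using dH card_image[OF inj] cZ by simp
    show "degree (monom 1 j :: real poly) < card (t ` Z)"
      using degree_monom_le[of "1::real" j] card_image[OF inj] cZ j by linarith
  qed
  then have "coeff H (Suc N) = 0" using j by simp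
  moreover have "coeff H (Suc N) = (\<Sum>v\<in>Z. ccoef t Z v * t v ^ j)"
  proof -
    have "\<And>v. v \<in> Z \<Longrightarrow> coeff (PP t (Z - {v})) (Suc N) = 1"
    proof -
      fix v assume v: "v \<in> Z"
      have "card (Z - {v}) = Suc N" using v fin cZ by simp
      then show "coeff (PP t (Z - {v})) (Suc N) = 1" using lead_PP[of "Z - {v}" t] fin by simp
    qed
    then show ?thesis unfolding H_def coeff_sum by simp
  qed
  ultimately show ?thesis by simp
qed

lemma prod_pos_iff:
  fixes f :: "nat \<Rightarrow> real"
  assumes "finite S" "\<And>u. u \<in> S \<Longrightarrow> f u \<noteq> 0"
  shows "0 < (\<Prod>u\<in>S. f u) \<longleftrightarrow> even (card {u\<in>S. f u < 0})"
  using assms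
proof (induction S rule: finite_induct)
  case empty
  then show ?case by simp
next
  case (insert x F)
  have fx: "f x \<noteq> 0" using insert by auto
  have IH: "0 < (\<Prod>u\<in>F. f u) \<longleftrightarrow> even (card {u\<in>F. f u < 0})" using insert by auto
  have nz: "(\<Prod>u\<in>F. f u) \<noteq> 0" using insert by (auto simp: prod_zero_iff)
  have fin: "finite {u\<in>F. f u < 0}" using insert by auto
  show ?case
  proof (cases "f x < 0")
    case True
    then have "{u \<in> insert x F. f u < 0} = insert x {u\<in>F. f u < 0}" by auto
    then have c: "card {u \<in> insert x F. f u < 0} = Suc (card {u\<in>F. f u < 0})"
      using fin insert by simp
    have p: "(\<Prod>u\<in>insert x F. f u) = f x * (\<Prod>u\<in>F. f u)" using insert by simp
    show ?thesis unfolding p c using True IH nz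
      by (auto simp add: zero_less_mult_iff)
  next
    case False
    then have "{u \<in> insert x F. f u < 0} = {u\<in>F. f u < 0}" by auto
    then have c: "card {u \<in> insert x F. f u < 0} = card {u\<in>F. f u < 0}" by simp
    have p: "(\<Prod>u\<in>insert x F. f u) = f x * (\<Prod>u\<in>F. f u)" using insert by simp
    show ?thesis unfolding p c using False fx IH nz
      by (auto simp add: zero_less_mult_iff)
  qed
qed

lemma moments_eq:
  fixes t :: "nat \<Rightarrow> real"
  assumes eq: "(\<lambda>k. \<Sum>v\<in>S. u v * cpt t n v k) = (\<lambda>k. \<Sum>v\<in>S'. w v * cpt t n v k)"
    and su: "sum u S = 1" and sw: "sum w S' = 1" and j: "j \<le> n"
  shows "(\<Sum>v\<in>S. u v * t v ^ j) = (\<Sum>v\<in>S'. w v * t v ^ j)"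
proof (cases j)
  case 0
  then show ?thesis using su sw by simp
next
  case (Suc k)
  have "k < n" using Suc j by simp
  from fun_cong[OF eq, of k] this show ?thesis
    unfolding Suc cpt_def by (simp add: mult_ac)
qed

lemma phi_nonneg:
  fixes t :: "nat \<Rightarrow> real"
  assumes mono: "strict_mono_on V t" and RV: "R \<subseteq> V" and fin: "finite R" and v: "v \<in> V"
    and ev: "\<forall>w\<in>V - R. even (card {r\<in>R. w < r})"
  shows "0 \<le> poly (PP t R) (t v)" and "poly (PP t R) (t v) = 0 \<longleftrightarrow> v \<in> R"
proof -
  have A: "0 < poly (PP t R) (t v)" if nv: "v \<notin> R"
  proof -
    have nz: "\<And>u. u \<in> R \<Longrightarrow> t v - t u \<noteq> 0"
      using nv RV v mono strict_mono_on_eqD by fastforce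
    have "{u\<in>R. t v - t u < 0} = {u\<in>R. v < u}"
      using RV v mono nv by (auto simp: strict_mono_on_less)
    then show ?thesis unfolding poly_PP using prod_pos_iff[OF fin nz] ev v nv by auto
  qed
  have B: "poly (PP t R) (t v) = 0" if "v \<in> R"
    unfolding poly_PP using fin that by (auto intro: prod_zero)
  show "0 \<le> poly (PP t R) (t v)" using A B by force
  show "poly (PP t R) (t v) = 0 \<longleftrightarrow> v \<in> R" using A B by force
qed

lemma phi_diff:
  fixes t :: "nat \<Rightarrow> real"
  assumes finR: "finite R" and cR: "card R = Suc n"
    and eq: "(\<lambda>k. \<Sum>v\<in>S. u v * cpt t n v k) = (\<lambda>k. \<Sum>v\<in>S'. w v * cpt t n v k)"
    and su: "sum u S = 1" and sw: "sum w S' = 1"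
  shows "(\<Sum>v\<in>S. u v * poly (PP t R) (t v)) - (\<Sum>v\<in>S'. w v * poly (PP t R) (t v))
     = (\<Sum>v\<in>S. u v * t v ^ Suc n) - (\<Sum>v\<in>S'. w v * t v ^ Suc n)"
proof -
  let ?P = "PP t R"
  have deg: "degree ?P \<le> Suc n" using degree_PP[OF finR, of t] cR by simp
  have lc: "coeff ?P (Suc n) = 1" using lead_PP[OF finR, of t] cR by simp
  have "(\<Sum>v\<in>S. u v * poly ?P (t v)) - (\<Sum>v\<in>S'. w v * poly ?P (t v))
     = (\<Sum>i\<le>Suc n. coeff ?P i * ((\<Sum>v\<in>S. u v * t v ^ i) - (\<Sum>v\<in>S'. w v * t v ^ i)))"
    unfolding sum_poly_swap[OF deg] by (simp add: sum_subtractf right_diff_distrib)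
  also have "\<dots> = coeff ?P (Suc n) * ((\<Sum>v\<in>S. u v * t v ^ Suc n) - (\<Sum>v\<in>S'. w v * t v ^ Suc n))"
    using moments_eq[OF eq su sw] by (simp add: sum.atMost_Suc)
  finally show ?thesis using lc by simp
qed

lemma lift_sub:
  fixes t :: "nat \<Rightarrow> real"
  assumes mono: "strict_mono_on V t"
    and RV: "R \<subseteq> V" and SV: "S \<subseteq> V" and finR: "finite R" and finS: "finite S"
    and cR: "card R = Suc n" and cS: "card S = Suc n"
    and evR: "\<forall>w\<in>V - R. even (card {r\<in>R. w < r})"
    and evS: "\<forall>w\<in>V - S. even (card {r\<in>S. w < r})"
    and lpos: "\<forall>v\<in>R. 0 < l v" and sl: "sum l R = 1"
    and mpos: "\<forall>v\<in>S. 0 \<le> m v" and sm: "sum m S = 1"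
    and eq: "(\<lambda>k. \<Sum>v\<in>R. l v * cpt t n v k) = (\<lambda>k. \<Sum>v\<in>S. m v * cpt t n v k)"
  shows "R \<subseteq> S"
proof -
  have z1: "(\<Sum>v\<in>R. l v * poly (PP t R) (t v)) = 0"
    by (rule sum.neutral) (use phi_nonneg(2)[OF mono RV finR _ evR] RV in auto)
  have z2: "(\<Sum>v\<in>S. m v * poly (PP t S) (t v)) = 0"
    by (rule sum.neutral) (use phi_nonneg(2)[OF mono SV finS _ evS] SV in auto)
  note d1 = phi_diff[OF finR cR eq[symmetric] sm sl]
  note d2 = phi_diff[OF finS cS eq sl sm]
  have n1: "0 \<le> (\<Sum>v\<in>S. m v * poly (PP t R) (t v))"
    using phi_nonneg(1)[OF mono RV finR _ evR] SV mpos by (auto intro!: sum_nonneg)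
  have n2: "\<forall>v\<in>R. 0 \<le> l v * poly (PP t S) (t v)"
    using phi_nonneg(1)[OF mono SV finS _ evS] RV lpos by (meson less_imp_le mult_nonneg_nonneg subsetD)
  have s0: "(\<Sum>v\<in>R. l v * poly (PP t S) (t v)) = 0"
  proof -
    have "0 \<le> (\<Sum>v\<in>R. l v * poly (PP t S) (t v))" by (rule sum_nonneg) (use n2 in blast)
    then show ?thesis using d1 d2 z1 z2 n1 by linarith
  qed
  have all0: "\<forall>v\<in>R. l v * poly (PP t S) (t v) = 0"
  proof -
    have "\<forall>v\<in>R. 0 \<le> l v * poly (PP t S) (t v)" by (fact n2)
    then show ?thesis using sum_nonneg_eq_0_iff[OF finR, of "\<lambda>v. l v * poly (PP t S) (t v)"] s0 by simp
  qed
  show ?thesis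
  proof
    fix v assume v: "v \<in> R"
    then have "l v * poly (PP t S) (t v) = 0" using all0 by simp
    then have "poly (PP t S) (t v) = 0" using lpos v by force
    then show "v \<in> S" using phi_nonneg(2)[OF mono SV finS _ evS] RV v by blast
  qed
qed

lemma sum_restr:
  fixes u f :: "nat \<Rightarrow> real"
  assumes "finite S" "W \<subseteq> S"
  shows "(\<Sum>v\<in>S. (if v \<in> W then u v else 0) * f v) = (\<Sum>v\<in>W. u v * f v)"
proof -
  have "(\<Sum>v\<in>S. (if v \<in> W then u v else 0) * f v) = (\<Sum>v\<in>S. if v \<in> W then u v * f v else 0)"
    by (rule sum.cong) auto
  also have "\<dots> = (\<Sum>v\<in>S \<inter> W. u v * f v)" using sum.inter_restrict[OF assms(1)] by metis
  also have "S \<inter> W = W" using assms(2) by blast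
  finally show ?thesis .
qed

lemma sum_restr1:
  fixes u :: "nat \<Rightarrow> real"
  assumes "finite S" "W \<subseteq> S"
  shows "(\<Sum>v\<in>S. (if v \<in> W then u v else 0)) = (\<Sum>v\<in>W. u v)"
  using sum_restr[OF assms, of u "\<lambda>_. 1"] by simp

lemma conv_ext:
  fixes u :: "nat \<Rightarrow> real"
  assumes fin: "finite S" and WS: "W \<subseteq> S" and pos: "\<forall>v\<in>W. 0 \<le> u v" and su: "sum u W = 1"
  shows "(\<lambda>k. \<Sum>v\<in>W. u v * cpt t n v k) \<in> conv t n S"
  unfolding conv_def
proof (intro CollectI exI[of _ "\<lambda>v. if v \<in> W then u v else 0"] conjI)
  show "\<forall>v\<in>S. 0 \<le> (if v \<in> W then u v else 0)" using pos by auto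
  show "(\<Sum>v\<in>S. if v \<in> W then u v else 0) = 1" using sum_restr1[OF fin WS] su by simp
  show "(\<lambda>k. \<Sum>v\<in>W. u v * cpt t n v k) = (\<lambda>k. \<Sum>v\<in>S. (if v \<in> W then u v else 0) * cpt t n v k)"
    using sum_restr[OF fin WS] by simp
qed

lemma ccoef_sign:
  fixes t :: "nat \<Rightarrow> real"
  assumes mono: "strict_mono_on V t" and ZV: "Z \<subseteq> V" and fin: "finite Z" and v: "v \<in> Z"
  shows "0 < ccoef t Z v \<longleftrightarrow> even (card {u\<in>Z. v < u})" and "ccoef t Z v \<noteq> 0"
proof -
  have nz: "\<And>u. u \<in> Z - {v} \<Longrightarrow> t v - t u \<noteq> 0"
    using ZV v mono strict_mono_on_eqD by fastforce
  have e: "{u\<in>Z - {v}. t v - t u < 0} = {u\<in>Z. v < u}"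
    using ZV v strict_mono_on_less[OF mono] by auto
  have "0 < (\<Prod>u\<in>Z - {v}. t v - t u) \<longleftrightarrow> even (card {u\<in>Z. v < u})"
  proof -
    have "0 < (\<Prod>u\<in>Z - {v}. t v - t u) \<longleftrightarrow> even (card {u\<in>Z - {v}. t v - t u < 0})"
      by (rule prod_pos_iff) (use fin nz in auto)
    then show ?thesis unfolding e .
  qed
  moreover have "(\<Prod>u\<in>Z - {v}. t v - t u) \<noteq> 0" using nz fin by simp
  ultimately show "0 < ccoef t Z v \<longleftrightarrow> even (card {u\<in>Z. v < u})" "ccoef t Z v \<noteq> 0"
    unfolding ccoef_def by auto
qed

lemma tri_props:
  assumes "triangulation t V n T" "S \<in> T"
  shows "S \<subseteq> V" "card S = Suc n"
  using assms unfolding triangulation_def by auto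

lemma clash:
  fixes t :: "nat \<Rightarrow> real"
  assumes mono: "strict_mono_on V t" and finV: "finite V"
    and tri: "triangulation t V n T"
    and ZV: "Z \<subseteq> V" and cZ: "card Z = Suc (Suc n)"
    and R: "R \<in> T" and R': "R' \<in> T"
    and XR: "{v\<in>Z. odd (card {u\<in>Z. v < u})} \<subseteq> R"
    and YR': "{v\<in>Z. even (card {u\<in>Z. v < u})} \<subseteq> R'"
  shows False
proof -
  define X where "X = {v\<in>Z. odd (card {u\<in>Z. v < u})}"
  define Y where "Y = {v\<in>Z. even (card {u\<in>Z. v < u})}"
  define c where "c = ccoef t Z"
  have finZ: "finite Z" using ZV finV finite_subset by blast
  have inj: "inj_on t Z" using mono ZV strict_mono_on_imp_inj_on inj_on_subset by blast
  have ZXY: "Z = X \<union> Y" and dXY: "X \<inter> Y = {}" unfolding X_def Y_def by auto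
  have finX: "finite X" and finY: "finite Y" using finZ ZXY by auto
  have cY: "\<forall>v\<in>Y. 0 < c v" unfolding Y_def c_def using ccoef_sign[OF mono ZV finZ] by auto
  have cX: "\<forall>v\<in>X. c v < 0" unfolding X_def c_def using ccoef_sign[OF mono ZV finZ]
    by (metis (no_types, lifting) linorder_neqE_linordered_idom mem_Collect_eq)
  have Zne: "Z \<noteq> {}" using cZ by auto
  have "{u\<in>Z. Max Z < u} = {}" using Max_ge[OF finZ] by (auto simp: not_less[symmetric])
  then have "Max Z \<in> Y" unfolding Y_def using Max_in[OF finZ Zne] by (simp only: mem_Collect_eq card.empty) simp
  then have Yne: "Y \<noteq> {}" by auto
  define s where "s = sum c Y"
  have spos: "0 < s" unfolding s_def using sum_pos[OF finY Yne] cY by auto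
  have mom: "\<And>j. j \<le> n \<Longrightarrow> (\<Sum>v\<in>Y. c v * t v ^ j) = - (\<Sum>v\<in>X. c v * t v ^ j)"
  proof -
    fix j assume j: "j \<le> n"
    have "(\<Sum>v\<in>Z. c v * t v ^ j) = 0" unfolding c_def by (rule circuit[OF finZ inj cZ j])
    then show "(\<Sum>v\<in>Y. c v * t v ^ j) = - (\<Sum>v\<in>X. c v * t v ^ j)"
      unfolding ZXY using sum.union_disjoint[OF finX finY dXY, of "\<lambda>v. c v * t v ^ j"] by linarith
  qed
  have sX: "sum c X = - s" using mom[of 0] unfolding s_def by simp
  define p where "p = (\<lambda>k. \<Sum>v\<in>Y. (c v / s) * cpt t n v k)"
  have p2: "p = (\<lambda>k. \<Sum>v\<in>X. (- c v / s) * cpt t n v k)"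
  proof
    fix k
    show "p k = (\<Sum>v\<in>X. (- c v / s) * cpt t n v k)"
    proof (cases "k < n")
      case True
      have "p k = (\<Sum>v\<in>Y. c v * t v ^ Suc k) / s"
        unfolding p_def cpt_def using True by (simp add: sum_divide_distrib mult_ac)
      also have "\<dots> = (\<Sum>v\<in>X. - c v * t v ^ Suc k) / s" using mom[of "Suc k"] True
        by (simp add: sum_negf)
      also have "\<dots> = (\<Sum>v\<in>X. (- c v / s) * cpt t n v k)"
        unfolding cpt_def using True by (simp add: sum_divide_distrib mult_ac)
      finally show ?thesis .
    next
      case False
      then show ?thesis unfolding p_def cpt_def by simp
    qed
  qed
  have RV: "R \<subseteq> V" and R'V: "R' \<subseteq> V" and cR: "card R = Suc n" and cR': "card R' = Suc n"
    using tri_props[OF tri R] tri_props[OF tri R'] by auto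
  have finR: "finite R" and finR': "finite R'" using RV R'V finV finite_subset by auto
  have pR': "p \<in> conv t n R'" unfolding p_def
    by (rule conv_ext[OF finR' YR'[folded Y_def]]) (use cY spos s_def in \<open>auto simp: sum_divide_distrib[symmetric] less_imp_le\<close>)
  have pR: "p \<in> conv t n R" unfolding p2
    by (rule conv_ext[OF finR XR[folded X_def]]) (use cX spos sX in \<open>auto simp: sum_divide_distrib[symmetric] less_imp_le sum_negf divide_nonpos_pos\<close>)
  have "p \<in> conv t n (R \<inter> R')" using tri R R' pR pR' unfolding triangulation_def by blast
  then obtain \<mu> where \<mu>pos: "\<forall>v\<in>R \<inter> R'. 0 \<le> \<mu> v" and \<mu>s: "sum \<mu> (R \<inter> R') = 1"
    and p3: "p = (\<lambda>k. \<Sum>v\<in>R \<inter> R'. \<mu> v * cpt t n v k)"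
    unfolding conv_def by blast
  define u1 where "u1 = (\<lambda>v. if v \<in> Y then c v / s else 0)"
  define u2 where "u2 = (\<lambda>v. if v \<in> R \<inter> R' then \<mu> v else 0)"
  have e1: "p = (\<lambda>k. \<Sum>v\<in>R'. u1 v * cpt t n v k)"
    unfolding p_def u1_def using sum_restr[OF finR' YR'[folded Y_def]] by simp
  have e2: "p = (\<lambda>k. \<Sum>v\<in>R'. u2 v * cpt t n v k)"
    unfolding p3 u2_def using sum_restr[OF finR', of "R \<inter> R'"] by simp
  have s1: "sum u1 R' = 1" unfolding u1_def using sum_restr1[OF finR' YR'[folded Y_def]] spos s_def
    by (simp add: sum_divide_distrib[symmetric])
  have s2: "sum u2 R' = 1" unfolding u2_def using sum_restr1[OF finR', of "R \<inter> R'"] \<mu>s by simp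
  have inj': "inj_on t R'" using mono R'V strict_mono_on_imp_inj_on inj_on_subset by blast
  have YR: "Y \<subseteq> R"
  proof
    fix v assume v: "v \<in> Y"
    have vR': "v \<in> R'" using v YR'[folded Y_def] by blast
    have "(\<lambda>v. u1 v - u2 v) v = 0"
    proof (rule indep[OF finR' inj' _ _ vR'])
      show "card R' \<le> Suc n" using cR' by simp
      fix j assume j: "j \<le> n"
      have "(\<Sum>v\<in>R'. u1 v * t v ^ j) = (\<Sum>v\<in>R'. u2 v * t v ^ j)"
        using moments_eq[OF e1[symmetric, THEN trans, OF e2] s1 s2 j] .
      then show "(\<Sum>v\<in>R'. (u1 v - u2 v) * t v ^ j) = 0"
        by (simp add: left_diff_distrib sum_subtractf)
    qed
    then have "u2 v = c v / s" unfolding u1_def using v by simp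
    moreover have "c v / s > 0" using cY v spos by simp
    ultimately show "v \<in> R" unfolding u2_def by (auto split: if_splits)
  qed
  have "Z \<subseteq> R" using YR XR[folded X_def] ZXY by blast
  then have "card Z \<le> card R" using card_mono[OF finR] by blast
  then show False using cZ cR by simp
qed


lemma ar_even: "((Suc b) + 2) div 2 - (a+1) div 2 = (b+2) div 2 - (a+1) div 2 + (if a \<le> Suc b \<and> even (Suc b) then 1 else (0::nat))"
  by (cases "a \<le> Suc b"; cases "even b") (simp_all; presburger)+

lemma ar_odd: "((Suc b) + 1) div 2 - a div 2 = (b+1) div 2 - a div 2 + (if a \<le> Suc b \<and> odd (Suc b) then 1 else (0::nat))"
  by (cases "a \<le> Suc b"; cases "even b") (simp_all; presburger)+

lemma card_even_Icc: "card {v\<in>{a..b::nat}. even v} = (b + 2) div 2 - (a + 1) div 2"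
proof (induction b)
  case 0
  have "{v\<in>{a..0::nat}. even v} = (if a = 0 then {0} else {})" by auto
  then show ?case by simp
next
  case (Suc b)
  have "{v\<in>{a..Suc b}. even v} = {v\<in>{a..b}. even v} \<union> (if a \<le> Suc b \<and> even (Suc b) then {Suc b} else {})"
    by (auto simp: le_Suc_eq)
  then have "card {v\<in>{a..Suc b}. even v} = card {v\<in>{a..b}. even v} + (if a \<le> Suc b \<and> even (Suc b) then 1 else 0)"
    by (auto simp: card_insert_if)
  then show ?case using Suc.IH ar_even[of b a] by simp
qed

lemma card_odd_Icc: "card {v\<in>{a..b::nat}. odd v} = (b + 1) div 2 - a div 2"
proof (induction b)
  case 0
  have "{v\<in>{a..0::nat}. odd v} = {}" by (auto dest: odd_pos)
  then show ?case by simp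
next
  case (Suc b)
  have "{v\<in>{a..Suc b}. odd v} = {v\<in>{a..b}. odd v} \<union> (if a \<le> Suc b \<and> odd (Suc b) then {Suc b} else {})"
    by (auto simp: le_Suc_eq odd_pos)
  then have "card {v\<in>{a..Suc b}. odd v} = card {v\<in>{a..b}. odd v} + (if a \<le> Suc b \<and> odd (Suc b) then 1 else 0)"
    by (auto simp: card_insert_if)
  then show ?case using Suc.IH ar_odd[of b a] by simp
qed

lemma card_above_diff:
  assumes "finite S"
  shows "card ({Suc x..m} - S) = (m - x) - card (S \<inter> {Suc x..m})"
proof -
  have "{Suc x..m} - S = {Suc x..m} - (S \<inter> {Suc x..m})" by blast
  moreover have "card ({Suc x..m} - (S \<inter> {Suc x..m})) = card {Suc x..m} - card (S \<inter> {Suc x..m})"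
    by (rule card_Diff_subset) (use assms in auto)
  ultimately show ?thesis by simp
qed

abbreviation sl :: "nat set \<Rightarrow> nat list" where "sl S \<equiv> sorted_list_of_set S"

lemma sl_less_iff:
  assumes "finite S" "i < card S" "j < card S"
  shows "sl S ! i < sl S ! j \<longleftrightarrow> i < j"
proof -
  have sw: "sorted_wrt (<) (sl S)" using assms by simp
  have len: "length (sl S) = card S" by simp
  show ?thesis
  proof
    assume "sl S ! i < sl S ! j"
    then show "i < j" using sorted_wrt_nth_less[OF sw, of j i] assms len
      by (metis linorder_neqE_nat order_less_asym)
  next
    assume "i < j" then show "sl S ! i < sl S ! j" using sorted_wrt_nth_less[OF sw] assms len by simp
  qed
qed

lemma sl_mem:
  assumes "finite S" "x \<in> S"
  obtains i where "i < card S" "x = sl S ! i"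
  using assms by (metis in_set_conv_nth length_sorted_list_of_set set_sorted_list_of_set)

lemma sl_in:
  assumes "finite S" "i < card S"
  shows "sl S ! i \<in> S"
  using assms by (metis nth_mem length_sorted_list_of_set set_sorted_list_of_set)

lemma card_less_nth:
  fixes S :: "nat set"
  assumes fin: "finite S" and j0: "j0 \<le> card S"
    and h: "\<forall>j<card S. (sl S ! j < c \<longleftrightarrow> j < j0)"
  shows "card {s\<in>S. s < c} = j0"
proof -
  have "{s\<in>S. s < c} = (\<lambda>j. sl S ! j) ` {..<j0}"
  proof
    show "{s \<in> S. s < c} \<subseteq> (!) (sl S) ` {..<j0}"
    proof
      fix s assume s: "s \<in> {s \<in> S. s < c}"
      then obtain i where i: "i < card S" "s = sl S ! i" using sl_mem[OF fin] by blast
      then show "s \<in> (!) (sl S) ` {..<j0}" using h s by auto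
    qed
    show "(!) (sl S) ` {..<j0} \<subseteq> {s \<in> S. s < c}"
      using h j0 sl_in[OF fin] by auto
  qed
  moreover have "inj_on (\<lambda>j. sl S ! j) {..<j0}"
    using j0 by (intro inj_onI) (simp add: nth_eq_iff_index_eq)
  ultimately show ?thesis by (simp add: card_image)
qed

lemma interlace_I1:
  assumes il: "interlace X Y" and x: "x \<in> X"
  shows "card {y\<in>Y. y < x} = card {x'\<in>X. x' < x} + 1"
proof -
  have finX: "finite X" and finY: "finite Y" and cY: "card Y = card X + 1"
    and h: "\<forall>i < card X. sl Y ! i < sl X ! i \<and> sl X ! i < sl Y ! (i + 1)"
    using il unfolding interlace_def by auto
  obtain i where i: "i < card X" "x = sl X ! i" using sl_mem[OF finX x] by blast
  have "card {x'\<in>X. x' < x} = i"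
    by (rule card_less_nth[OF finX]) (use i sl_less_iff[OF finX] in auto)
  moreover have "card {y\<in>Y. y < x} = i + 1"
  proof (rule card_less_nth[OF finY])
    show "i + 1 \<le> card Y" using i cY by simp
    show "\<forall>j<card Y. (sl Y ! j < x) = (j < i + 1)"
    proof (intro allI impI)
      fix j assume j: "j < card Y"
      show "(sl Y ! j < x) = (j < i + 1)"
      proof
        assume a: "sl Y ! j < x"
        show "j < i + 1"
        proof (rule ccontr)
          assume "\<not> j < i + 1"
          then have "sl Y ! (i+1) \<le> sl Y ! j" using sl_less_iff[OF finY, of "i+1" j] j
            by (cases "i + 1 = j") auto
          then show False using a h i by force
        qed
      next
        assume a: "j < i + 1"
        then have "sl Y ! j \<le> sl Y ! i" using sl_less_iff[OF finY, of j i] i cY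
          by (cases "i = j") auto
        then show "sl Y ! j < x" using h i by force
      qed
    qed
  qed
  ultimately show ?thesis by simp
qed

lemma interlace_I2:
  assumes il: "interlace X Y" and y: "y \<in> Y"
  shows "card {y'\<in>Y. y' < y} = card {x\<in>X. x < y}"
proof -
  have finX: "finite X" and finY: "finite Y" and cY: "card Y = card X + 1"
    and h: "\<forall>i < card X. sl Y ! i < sl X ! i \<and> sl X ! i < sl Y ! (i + 1)"
    using il unfolding interlace_def by auto
  obtain i where i: "i < card Y" "y = sl Y ! i" using sl_mem[OF finY y] by blast
  have "card {y'\<in>Y. y' < y} = i"
    by (rule card_less_nth[OF finY]) (use i sl_less_iff[OF finY] in auto)
  moreover have "card {x\<in>X. x < y} = i"
  proof (rule card_less_nth[OF finX])
    show "i \<le> card X" using i cY by simp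
    show "\<forall>j<card X. (sl X ! j < y) = (j < i)"
    proof (intro allI impI)
      fix j assume j: "j < card X"
      show "(sl X ! j < y) = (j < i)"
      proof
        assume a: "sl X ! j < y"
        show "j < i"
        proof (rule ccontr)
          assume "\<not> j < i"
          then have "sl Y ! i \<le> sl Y ! j" using sl_less_iff[OF finY, of i j] j i cY
            by (cases "i = j") auto
          then show False using a h j i(2) by force
        qed
      next
        assume a: "j < i"
        then have "sl Y ! (j+1) \<le> sl Y ! i" using sl_less_iff[OF finY, of "j+1" i] i
          by (cases "i = j + 1") auto
        then show "sl X ! j < y" using h j i by force
      qed
    qed
  qed
  ultimately show ?thesis by simp
qed

lemma interlace_disj:
  assumes "interlace X Y" shows "X \<inter> Y = {}"
  using interlace_I1[OF assms] interlace_I2[OF assms] by force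

lemma interlace_card: "interlace X Y \<Longrightarrow> card Y = card X + 1 \<and> finite X \<and> finite Y"
  unfolding interlace_def by auto


definition NN :: "nat \<Rightarrow> nat \<Rightarrow> nat set" where
  "NN d i = {v\<in>{1..2*d+3}. if even v then v \<le> 2*i else 2*i+3 \<le> v}"

definition XZ :: "nat \<Rightarrow> nat \<Rightarrow> nat set" where
  "XZ m z = {v\<in>{1..m}. v \<noteq> z \<and> ((v < z \<and> even v) \<or> (z < v \<and> odd v))}"

definition YZ :: "nat \<Rightarrow> nat \<Rightarrow> nat set" where
  "YZ m z = {v\<in>{1..m}. v \<noteq> z \<and> ((v < z \<and> odd v) \<or> (z < v \<and> even v))}"

lemma card_above_Z:
  assumes "v \<in> {1..m}" "v \<noteq> z"
  shows "card {u\<in>{1..m} - {z}. v < u} = m - v - (if v < z \<and> z \<le> m then 1 else 0)"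
proof -
  have "{u\<in>{1..m} - {z}. v < u} = {Suc v..m} - {z}" using assms by auto
  moreover have "card ({Suc v..m} - {z}) = (m - v) - card ({z} \<inter> {Suc v..m})"
    by (rule card_above_diff) simp
  moreover have "card ({z} \<inter> {Suc v..m}) = (if v < z \<and> z \<le> m then 1 else 0)" by auto
  ultimately show ?thesis by simp
qed

lemma clashZ:
  fixes t :: "nat \<Rightarrow> real"
  assumes mono: "strict_mono_on {1..2*d+4} t"
    and tri: "triangulation t {1..2*d+4} (2*d+1) T"
    and z: "z \<in> {1..2*d+4}" and R: "R \<in> T" and R': "R' \<in> T"
    and XR: "XZ (2*d+4) z \<subseteq> R" and YR: "YZ (2*d+4) z \<subseteq> R'"
  shows False
proof -
  let ?m = "2*d+4"
  let ?Z = "{1..?m} - {z}"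
  have cZ: "card ?Z = Suc (Suc (2*d+1))" using z by simp
  have X: "{v\<in>?Z. odd (card {u\<in>?Z. v < u})} = XZ ?m z"
  proof -
    have "\<And>v. v \<in> ?Z \<Longrightarrow> odd (card {u\<in>?Z. v < u}) \<longleftrightarrow> ((v < z \<and> even v) \<or> (z < v \<and> odd v))"
    proof -
      fix v assume v: "v \<in> ?Z"
      then have "card {u\<in>?Z. v < u} = ?m - v - (if v < z \<and> z \<le> ?m then 1 else 0)"
        using card_above_Z[of v ?m z] by auto
      then show "odd (card {u\<in>?Z. v < u}) \<longleftrightarrow> ((v < z \<and> even v) \<or> (z < v \<and> odd v))"
        using v z by (cases "v < z") (auto; presburger)+
    qed
    then show ?thesis unfolding XZ_def by auto
  qed
  have Y: "{v\<in>?Z. even (card {u\<in>?Z. v < u})} = YZ ?m z"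
  proof -
    have "\<And>v. v \<in> ?Z \<Longrightarrow> even (card {u\<in>?Z. v < u}) \<longleftrightarrow> ((v < z \<and> odd v) \<or> (z < v \<and> even v))"
    proof -
      fix v assume v: "v \<in> ?Z"
      then have "card {u\<in>?Z. v < u} = ?m - v - (if v < z \<and> z \<le> ?m then 1 else 0)"
        using card_above_Z[of v ?m z] by auto
      then show "even (card {u\<in>?Z. v < u}) \<longleftrightarrow> ((v < z \<and> odd v) \<or> (z < v \<and> even v))"
        using v z by (cases "v < z") (auto; presburger)+
    qed
    then show ?thesis unfolding YZ_def by auto
  qed
  show False
    by (rule clash[OF mono _ tri _ cZ R R']) (use X Y XR YR in auto)
qed

lemma XZ_N1: "i \<le> d + 1 \<Longrightarrow> XZ (2*d+4) (2*i+1) = NN d i"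
  unfolding XZ_def NN_def by (auto; presburger)

lemma XZ_N2: "i \<le> d + 1 \<Longrightarrow> XZ (2*d+4) (2*i+2) = NN d i"
  unfolding XZ_def NN_def by (auto; presburger)

lemma card3_sorted:
  fixes D :: "nat set"
  assumes "card D = 3"
  obtains u v w where "D = {u, v, w}" "u < v" "v < w"
proof -
  have fin: "finite D" using assms by (metis card.infinite zero_neq_numeral)
  have len: "length (sl D) = 3" using assms by simp
  then obtain a b c where abc: "sl D = [a, b, c]"
    by (metis (no_types, lifting) length_0_conv length_Suc_conv numeral_3_eq_3)
  have "D = set (sl D)" using fin by simp
  then have D: "D = {a, b, c}" using abc by simp
  have sw: "sorted_wrt (<) (sl D)" by simp
  then have "a < b" "b < c" using abc by auto
  then show ?thesis using that D by blast
qed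

lemma card2_sorted:
  fixes D :: "nat set"
  assumes "card D = 2"
  obtains u v where "D = {u, v}" "u < v"
proof -
  have fin: "finite D" using assms by (metis card.infinite zero_neq_numeral)
  have len: "length (sl D) = 2" using assms by simp
  then obtain a b where abc: "sl D = [a, b]"
    by (metis (no_types, lifting) length_0_conv length_Suc_conv numeral_2_eq_2)
  have "D = set (sl D)" using fin by simp
  then have D: "D = {a, b}" using abc by simp
  have sw: "sorted_wrt (<) (sl D)" by simp
  then have "a < b" using abc by auto
  then show ?thesis using that D by blast
qed

lemma card_F3:
  assumes "1 \<le> u" "u < v" "v < w" "w \<le> m"
  shows "card {f\<in>{1..m} - {u,v,w}. w < f} = m - w"
    and "card {f\<in>{1..m} - {u,v,w}. v < f} = m - v - 1"
    and "card {f\<in>{1..m} - {u,v,w}. u < f} = m - u - 2"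
    and "card ({1..m} - {u,v,w}) = m - 3"
proof -
  have e: "\<And>x. {f\<in>{1..m} - {u,v,w}. x < f} = {Suc x..m} - {u,v,w}" by auto
  have c: "\<And>x. card ({Suc x..m} - {u,v,w}) = (m - x) - card ({u,v,w} \<inter> {Suc x..m})"
    by (rule card_above_diff) simp
  have "{u,v,w} \<inter> {Suc w..m} = {}" using assms by auto
  then show "card {f\<in>{1..m} - {u,v,w}. w < f} = m - w" unfolding e c by simp
  have "{u,v,w} \<inter> {Suc v..m} = {w}" using assms by auto
  then show "card {f\<in>{1..m} - {u,v,w}. v < f} = m - v - 1" unfolding e c by simp
  have "{u,v,w} \<inter> {Suc u..m} = {v,w}" using assms by auto
  then show "card {f\<in>{1..m} - {u,v,w}. u < f} = m - u - 2" unfolding e c using assms by simp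
  have "card ({1..m} - {u,v,w}) = card {1..m} - card {u,v,w}"
    by (rule card_Diff_subset) (use assms in auto)
  then show "card ({1..m} - {u,v,w}) = m - 3" using assms by simp
qed

lemma facet_triple:
  assumes "1 \<le> u" "u < v" "v < w" "w \<le> 2*d+4"
    and par: "(even u \<and> odd v \<and> even w) \<or> (odd u \<and> even v \<and> odd w)"
  shows "facet {1..2*d+4} (2*d+1) ({1..2*d+4} - {u,v,w})"
proof -
  let ?m = "2*d+4"
  let ?F = "{1..?m} - {u,v,w}"
  note cs = card_F3[OF assms(1-4)]
  have D: "{1..?m} - ?F = {u,v,w}" using assms by auto
  have cF: "card ?F = 2*d+1" using cs(4) by simp
  show ?thesis
  proof (cases "even u")
    case True
    then have "even u" "odd v" "even w" using par by auto
    then have "lower_facet {1..?m} (2*d+1) ?F"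
      unfolding lower_facet_def D using cs cF assms by (auto; presburger)
    then show ?thesis unfolding facet_def by simp
  next
    case False
    then have "odd u" "even v" "odd w" using par by auto
    then have "upper_facet {1..?m} (2*d+1) ?F"
      unfolding upper_facet_def D using cs cF assms by (auto; presburger)
    then show ?thesis unfolding facet_def by simp
  qed
qed

lemma facet_parity:
  assumes "facet {1..2*d+4} (2*d+1) F"
  obtains u v w where "F = {1..2*d+4} - {u,v,w}" "1 \<le> u" "u < v" "v < w" "w \<le> 2*d+4"
    "(even u \<and> odd v \<and> even w) \<or> (odd u \<and> even v \<and> odd w)"
proof -
  let ?m = "2*d+4"
  have FV: "F \<subseteq> {1..?m}" and cF: "card F = 2*d+1"
    using assms unfolding facet_def lower_facet_def upper_facet_def by auto
  have "card ({1..?m} - F) = 3" using FV cF by (simp add: card_Diff_subset finite_subset)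
  then obtain u v w where D: "{1..?m} - F = {u,v,w}" and uv: "u < v" "v < w" by (rule card3_sorted)
  have in3: "u \<in> {1..?m}" "v \<in> {1..?m}" "w \<in> {1..?m}" using D by auto
  have F: "F = {1..?m} - {u,v,w}" using D FV by auto
  note cs = card_F3[of u v w ?m]
  have b: "1 \<le> u" "w \<le> ?m" using in3 by auto
  have "(even u \<and> odd v \<and> even w) \<or> (odd u \<and> even v \<and> odd w)"
  proof (cases "lower_facet {1..?m} (2*d+1) F")
    case True
    then have "even (card {f\<in>F. w < f})" "even (card {f\<in>F. v < f})" "even (card {f\<in>F. u < f})"
      unfolding lower_facet_def using D by auto
    then show ?thesis unfolding F using cs b uv by (simp; presburger)
  next
    case False
    then have "upper_facet {1..?m} (2*d+1) F" using assms unfolding facet_def by simp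
    then have "odd (card {f\<in>F. w < f})" "odd (card {f\<in>F. v < f})" "odd (card {f\<in>F. u < f})"
      unfolding upper_facet_def using D by auto
    then show ?thesis unfolding F using cs b uv by (simp; presburger)
  qed
  then show ?thesis using that F b uv by blast
qed

lemma NN_split: "i \<le> d + 1 \<Longrightarrow> NN d i = {v\<in>{1..2*i}. even v} \<union> {v\<in>{2*i+3..2*d+3}. odd v}"
  unfolding NN_def by auto

lemma card_NN: "i \<le> d + 1 \<Longrightarrow> card (NN d i) = d + 1"
proof -
  assume i: "i \<le> d + 1"
  have "card (NN d i) = card {v\<in>{1..2*i}. even v} + card {v\<in>{2*i+3..2*d+3}. odd v}"
    unfolding NN_split[OF i] by (rule card_Un_disjoint) auto
  also have "\<dots> = ((2*i + 2) div 2 - (1 + 1) div 2) + ((2*d+3 + 1) div 2 - (2*i+3) div 2)"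
    unfolding card_even_Icc card_odd_Icc by simp
  also have "\<dots> = d + 1" using i by simp
  finally show ?thesis .
qed

lemma NN_sub: "NN d i \<subseteq> {1..2*d+4}" unfolding NN_def by auto

lemma N_nu: assumes "i \<le> d + 1" shows "NN d i \<in> nu (2*d+4) d"
proof -
  have nf: "\<not> (facet {1..2*d+4} (2*d+1) F \<and> NN d i \<subseteq> F)" for F
  proof
    assume a: "facet {1..2*d+4} (2*d+1) F \<and> NN d i \<subseteq> F"
    then obtain u v w where F: "F = {1..2*d+4} - {u,v,w}" and b: "1 \<le> u" "u < v" "v < w" "w \<le> 2*d+4"
      and par: "(even u \<and> odd v \<and> even w) \<or> (odd u \<and> even v \<and> odd w)"
      using facet_parity by blast
    have nin: "u \<notin> NN d i" "v \<notin> NN d i" "w \<notin> NN d i" using a F by auto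
    show False using par nin b unfolding NN_def by (auto; presburger)
  qed
  show ?thesis unfolding nu_def using NN_sub card_NN[OF assms] nf by auto
qed

lemma nu_N:
  assumes "A' \<in> nu (2*d+4) d"
  obtains i where "i \<le> d + 1" "A' = NN d i"
proof -
  let ?m = "2*d+4"
  have AV: "A' \<subseteq> {1..?m}" and cA: "card A' = d + 1"
    and nf: "\<And>F. facet {1..?m} (2*d+1) F \<Longrightarrow> \<not> A' \<subseteq> F"
    using assms unfolding nu_def by auto
  define C where "C = {1..?m} - A'"
  have cC: "card C = d + 3" unfolding C_def using AV cA by (simp add: card_Diff_subset finite_subset)
  have CV: "C \<subseteq> {1..?m}" unfolding C_def by auto
  have noT: False if "u \<in> C" "v \<in> C" "w \<in> C" "u < v" "v < w"
      "(even u \<and> odd v \<and> even w) \<or> (odd u \<and> even v \<and> odd w)" for u v w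
  proof -
    have "facet {1..?m} (2*d+1) ({1..?m} - {u,v,w})"
      by (rule facet_triple) (use that CV in auto)
    moreover have "A' \<subseteq> {1..?m} - {u,v,w}" using that AV unfolding C_def by auto
    ultimately show False using nf by blast
  qed
  define E where "E = {v\<in>C. even v}"
  define Od where "Od = {v\<in>C. odd v}"
  have finC: "finite C" using CV finite_subset by blast
  have finE: "finite E" and finO: "finite Od" unfolding E_def Od_def using finC by auto
  have cEO: "card C = card E + card Od"
  proof -
    have "C = E \<union> Od" "E \<inter> Od = {}" unfolding E_def Od_def by auto
    then show ?thesis using card_Un_disjoint finE finO by metis
  qed
  have cE: "card E \<le> d + 2"
  proof -
    have "card E \<le> card {v\<in>{1..?m}. even v}" by (rule card_mono) (use CV in \<open>auto simp: E_def\<close>)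
    then show ?thesis unfolding card_even_Icc by simp
  qed
  have cO: "card Od \<le> d + 2"
  proof -
    have "card Od \<le> card {v\<in>{1..?m}. odd v}" by (rule card_mono) (use CV in \<open>auto simp: Od_def\<close>)
    then show ?thesis unfolding card_odd_Icc by simp
  qed
  have Ene: "E \<noteq> {}" using cEO cC cO by auto
  have One: "Od \<noteq> {}" using cEO cC cE by auto
  define e1 where "e1 = Min E"
  define o1 where "o1 = Min Od"
  have e1E: "e1 \<in> E" unfolding e1_def using Min_in[OF finE Ene] .
  have o1O: "o1 \<in> Od" unfolding o1_def using Min_in[OF finO One] .
  have e1min: "\<And>x. x \<in> E \<Longrightarrow> e1 \<le> x" unfolding e1_def using Min_le[OF finE] by blast
  have o1min: "\<And>x. x \<in> Od \<Longrightarrow> o1 \<le> x" unfolding o1_def using Min_le[OF finO] by blast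
  have ev: "even e1" "e1 \<in> C" using e1E unfolding E_def by auto
  have od: "odd o1" "o1 \<in> C" using o1O unfolding Od_def by auto
  have e1m: "1 \<le> e1" "e1 \<le> ?m" using ev CV by auto
  have o1m: "1 \<le> o1" "o1 \<le> ?m" using od CV by auto
  have "e1 \<noteq> o1" using ev od by auto
  then consider "e1 < o1" | "o1 < e1" by linarith
  then show ?thesis
  proof cases
    case 1
    have Esub: "E \<subseteq> {v\<in>{1..o1 - 1}. even v}"
    proof
      fix x assume x: "x \<in> E"
      have "x < o1"
      proof (rule ccontr)
        assume "\<not> x < o1"
        then have "o1 < x" using x od unfolding E_def by (cases "x = o1") auto
        then show False using noT[of e1 o1 x] 1 ev od x unfolding E_def by auto
      qed
      then show "x \<in> {v\<in>{1..o1 - 1}. even v}" using x CV unfolding E_def by auto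
    qed
    have Osub: "Od \<subseteq> {v\<in>{o1..?m}. odd v}" using o1min CV unfolding Od_def by auto
    have "card E \<le> (o1 - 1 + 2) div 2 - (1 + 1) div 2"
      using card_mono[OF _ Esub] unfolding card_even_Icc by simp
    moreover have "card Od \<le> (?m + 1) div 2 - o1 div 2"
      using card_mono[OF _ Osub] unfolding card_odd_Icc by simp
    moreover obtain j where j: "o1 = 2*j+1" using od by (auto elim!: oddE)
    ultimately have "card C \<le> d + 2" using cEO o1m by simp
    then show ?thesis using cC by simp
  next
    case 2
    have Osub: "Od \<subseteq> {v\<in>{1..e1 - 1}. odd v}"
    proof
      fix x assume x: "x \<in> Od"
      have "x < e1"
      proof (rule ccontr)
        assume "\<not> x < e1"
        then have "e1 < x" using x ev unfolding Od_def by (cases "x = e1") auto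
        then show False using noT[of o1 e1 x] 2 ev od x unfolding Od_def by auto
      qed
      then show "x \<in> {v\<in>{1..e1 - 1}. odd v}" using x CV unfolding Od_def by auto
    qed
    have Esub: "E \<subseteq> {v\<in>{e1..?m}. even v}" using e1min CV unfolding E_def by auto
    have c1: "card {v\<in>{1..e1 - 1}. odd v} = e1 div 2"
      unfolding card_odd_Icc using e1m ev by simp
    have c2: "card {v\<in>{e1..?m}. even v} = d + 3 - e1 div 2"
      unfolding card_even_Icc using e1m ev by simp
    have b1: "card Od \<le> e1 div 2" using card_mono[OF _ Osub] c1 by simp
    have b2: "card E \<le> d + 3 - e1 div 2" using card_mono[OF _ Esub] c2 by simp
    have eqO: "Od = {v\<in>{1..e1 - 1}. odd v}"
      by (rule card_subset_eq[OF _ Osub]) (use b1 b2 cEO cC c1 e1m in auto)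
    have eqE: "E = {v\<in>{e1..?m}. even v}"
      by (rule card_subset_eq[OF _ Esub]) (use b1 b2 cEO cC c2 e1m in auto)
    define i where "i = e1 div 2 - 1"
    have e1i: "e1 = 2*i + 2" unfolding i_def using ev e1m by (auto elim!: evenE)
    have i: "i \<le> d + 1" using e1i e1m by simp
    have "A' = {1..?m} - C" unfolding C_def using AV by auto
    also have "C = E \<union> Od" unfolding E_def Od_def by auto
    also have "{1..?m} - (E \<union> Od) = NN d i"
    proof (rule set_eqI)
      fix v
      show "v \<in> {1..?m} - (E \<union> Od) \<longleftrightarrow> v \<in> NN d i"
      proof (cases "even v")
        case True
        then show ?thesis unfolding eqE eqO NN_def e1i using i by auto
      next
        case False
        then have "v \<noteq> 2*i+2" "v \<noteq> 2*d+4" by auto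
        then show ?thesis unfolding eqE eqO NN_def e1i using i False by auto
      qed
    qed
    finally show ?thesis using that i by blast
  qed
qed


lemma compl1:
  fixes S :: "nat set"
  assumes "S \<subseteq> {a..b}" "card S + 1 = card {a..b}"
  obtains e where "e \<in> {a..b}" "S = {a..b} - {e}"
proof -
  have "card ({a..b} - S) = 1" using assms by (simp add: card_Diff_subset finite_subset)
  then obtain e where e: "{a..b} - S = {e}" by (auto simp: card_Suc_eq)
  then have "e \<in> {a..b}" "S = {a..b} - {e}" using assms(1) by auto
  then show ?thesis using that by blast
qed

lemma card_below_compl:
  assumes "lo \<le> a" "a \<le> Suc hi"
  shows "card {u\<in>{lo..hi} - {e}. u < a} = (a - lo) - (if lo \<le> e \<and> e < a then 1 else 0)"
proof -
  have "{u\<in>{lo..hi} - {e}. u < a} = {lo..<a} - {e}" using assms by auto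
  moreover have "card ({lo..<a} - {e}) = (a - lo) - (if lo \<le> e \<and> e < a then 1 else 0)"
    by (auto simp: card_Diff_singleton_if)
  ultimately show ?thesis by simp
qed

lemma card_filter_Un:
  assumes "finite A" "finite B" "A \<inter> B = {}"
  shows "card {u\<in>A \<union> B. P u} = card {u\<in>A. P u} + card {u\<in>B. P u}"
proof -
  have "{u\<in>A \<union> B. P u} = {u\<in>A. P u} \<union> {u\<in>B. P u}" by auto
  moreover have "card ({u\<in>A. P u} \<union> {u\<in>B. P u}) = card {u\<in>A. P u} + card {u\<in>B. P u}"
    by (rule card_Un_disjoint) (use assms in auto)
  ultimately show ?thesis by simp
qed

lemma NN_below1:
  assumes "1 \<le> k" "k \<le> d + 1"
  shows "card {v\<in>NN d k. v < 2*k} = k - 1"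
proof -
  have "{v\<in>NN d k. v < 2*k} = {v\<in>{1..2*k-1}. even v}" using assms unfolding NN_def by auto
  then have "card {v\<in>NN d k. v < 2*k} = (2*k - 1 + 2) div 2 - (1 + 1) div 2"
    using card_even_Icc[of 1 "2*k-1"] by simp
  then show ?thesis using assms by simp
qed

lemma NN_below2:
  assumes "k \<le> d"
  shows "card {v\<in>NN d k. v < 2*k+3} = k"
proof -
  have "{v\<in>NN d k. v < 2*k+3} = {v\<in>{1..2*k}. even v}" using assms unfolding NN_def by auto
  then have "card {v\<in>NN d k. v < 2*k+3} = (2*k + 2) div 2 - (1 + 1) div 2"
    using card_even_Icc[of 1 "2*k"] by simp
  then show ?thesis using assms by simp
qed

lemma NN_mem1: "1 \<le> k \<Longrightarrow> k \<le> d + 1 \<Longrightarrow> 2*k \<in> NN d k"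
  unfolding NN_def by auto

lemma NN_mem2: "k \<le> d \<Longrightarrow> 2*k+3 \<in> NN d k"
  unfolding NN_def by auto

lemma NN_sub2: "NN d k \<subseteq> {2..2*d+3}"
  unfolding NN_def by auto

lemma B_struct:
  assumes k: "k \<le> d + 1" and il: "interlace (NN d k) B" and BV: "B \<subseteq> {1..2*d+4}"
  obtains e where "e \<in> {1..2*d+4}" "e = 2*k+1 \<or> e = 2*k+2" "NN d k \<union> B = {1..2*d+4} - {e}"
proof -
  let ?A = "NN d k"
  have cA: "card ?A = d + 1" using card_NN[OF k] .
  have cB: "card B = d + 2" and finA: "finite ?A" and finB: "finite B"
    using interlace_card[OF il] cA by auto
  have dj: "?A \<inter> B = {}" using interlace_disj[OF il] .
  have cU: "card (?A \<union> B) + 1 = card {1..2*d+4}" using card_Un_disjoint[OF finA finB dj] cA cB by simp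
  have sub: "?A \<union> B \<subseteq> {1..2*d+4}" using NN_sub[of d k] BV by blast
  obtain e where e: "e \<in> {1..2*d+4}" and U: "?A \<union> B = {1..2*d+4} - {e}"
    by (rule compl1[OF sub cU])
  have cnt: "2 * card {v\<in>?A. v < a} + 1 = (a - 1) - (if 1 \<le> e \<and> e < a then 1 else 0)"
    if a: "a \<in> ?A" for a
  proof -
    have "card {u\<in>?A \<union> B. u < a} = card {u\<in>?A. u < a} + card {u\<in>B. u < a}"
      by (rule card_filter_Un[OF finA finB dj])
    also have "\<dots> = 2 * card {v\<in>?A. v < a} + 1" using interlace_I1[OF il a] by simp
    finally have "card {u\<in>?A \<union> B. u < a} = 2 * card {v\<in>?A. v < a} + 1" .
    moreover have "card {u\<in>?A \<union> B. u < a} = (a - 1) - (if 1 \<le> e \<and> e < a then 1 else 0)"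
      unfolding U by (rule card_below_compl) (use a NN_sub[of d k] in auto)
    ultimately show ?thesis by simp
  qed
  have eA: "e \<notin> ?A" using U by auto
  have lo: "2*k+1 \<le> e"
  proof (cases "k = 0")
    case True then show ?thesis using e by simp
  next
    case False
    have m: "2*k \<in> ?A" using NN_mem1[of k d] False k by simp
    have "2 * (k - 1) + 1 = (2*k - 1) - (if 1 \<le> e \<and> e < 2*k then 1 else 0)"
      using cnt[OF m] NN_below1[of k d] False k by simp
    then have "\<not> e < 2*k" using False e by (auto split: if_splits)
    moreover have "e \<noteq> 2*k" using m eA by auto
    ultimately show ?thesis by simp
  qed
  have hi: "e \<le> 2*k+2"
  proof (cases "k \<le> d")
    case False then show ?thesis using e k by simp
  next
    case True
    have m: "2*k+3 \<in> ?A" using NN_mem2[OF True] .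
    have "2 * k + 1 = (2*k + 2) - (if 1 \<le> e \<and> e < 2*k+3 then 1 else 0)"
      using cnt[OF m] NN_below2[OF True] by simp
    then have "e < 2*k+3" using e by (auto split: if_splits)
    then show ?thesis by simp
  qed
  have "e = 2*k+1 \<or> e = 2*k+2" using lo hi by linarith
  then show ?thesis using that e U by blast
qed

lemma S_struct:
  assumes k: "k \<le> d + 1" and il: "interlace \<Sigma> (NN d k)"
  obtains x where "x \<in> {2..2*d+3}" "x = 2*k+1 \<or> x = 2*k+2" "NN d k \<union> \<Sigma> = {2..2*d+3} - {x}"
proof -
  let ?A = "NN d k"
  have cA: "card ?A = d + 1" using card_NN[OF k] .
  have cS: "card \<Sigma> = d" and finA: "finite ?A" and finS: "finite \<Sigma>"
    using interlace_card[OF il] cA by auto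
  have dj: "?A \<inter> \<Sigma> = {}" using interlace_disj[OF il] by blast
  have SV: "\<Sigma> \<subseteq> {2..2*d+3}"
  proof
    fix s assume s: "s \<in> \<Sigma>"
    have I: "card {a\<in>?A. a < s} = card {s'\<in>\<Sigma>. s' < s} + 1" using interlace_I1[OF il s] .
    have "card {a\<in>?A. a < s} \<noteq> 0" using I by simp
    then have "{a\<in>?A. a < s} \<noteq> {}" by (intro notI) simp
    then obtain a where a: "a \<in> ?A" "a < s" by blast
    have "{s'\<in>\<Sigma>. s' < s} \<subseteq> \<Sigma> - {s}" by auto
    then have "card {s'\<in>\<Sigma>. s' < s} \<le> card (\<Sigma> - {s})" by (intro card_mono) (use finS in auto)
    also have "card (\<Sigma> - {s}) = d - 1" using cS s finS by simp
    finally have c1: "card {s'\<in>\<Sigma>. s' < s} \<le> d - 1" .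
    have "d \<noteq> 0" using cS s finS card_gt_0_iff by fastforce
    then have "card {a\<in>?A. a < s} < card ?A" using I cA c1 by linarith
    then have ne: "{a\<in>?A. a < s} \<noteq> ?A" by (intro notI) simp
    have "\<exists>b\<in>?A. \<not> b < s"
    proof (rule ccontr)
      assume "\<not> (\<exists>b\<in>?A. \<not> b < s)"
      then have "{a\<in>?A. a < s} = ?A" by blast
      then show False using ne by blast
    qed
    then obtain b where b: "b \<in> ?A" "\<not> b < s" by blast
    have "b \<noteq> s" using b dj s by auto
    then have "s < b" using b by simp
    moreover have "2 \<le> a" "b \<le> 2*d+3" using a(1) b(1) NN_sub2[of d k] by auto
    ultimately show "s \<in> {2..2*d+3}" using a by simp
  qed
  have cU: "card (?A \<union> \<Sigma>) + 1 = card {2..2*d+3}" using card_Un_disjoint[OF finA finS dj] cA cS by simp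
  have sub: "?A \<union> \<Sigma> \<subseteq> {2..2*d+3}" using NN_sub2[of d k] SV by blast
  obtain x where x: "x \<in> {2..2*d+3}" and U: "?A \<union> \<Sigma> = {2..2*d+3} - {x}"
    by (rule compl1[OF sub cU])
  have cnt: "2 * card {v\<in>?A. v < a} = (a - 2) - (if 2 \<le> x \<and> x < a then 1 else 0)"
    if a: "a \<in> ?A" for a
  proof -
    have "card {u\<in>?A \<union> \<Sigma>. u < a} = card {u\<in>?A. u < a} + card {u\<in>\<Sigma>. u < a}"
      by (rule card_filter_Un[OF finA finS dj])
    also have "\<dots> = 2 * card {v\<in>?A. v < a}" using interlace_I2[OF il a] by simp
    finally have "card {u\<in>?A \<union> \<Sigma>. u < a} = 2 * card {v\<in>?A. v < a}" .
    moreover have "card {u\<in>?A \<union> \<Sigma>. u < a} = (a - 2) - (if 2 \<le> x \<and> x < a then 1 else 0)"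
      unfolding U by (rule card_below_compl) (use a NN_sub2[of d k] in auto)
    ultimately show ?thesis by simp
  qed
  have xA: "x \<notin> ?A" using U by auto
  have lo: "2*k+1 \<le> x"
  proof (cases "k = 0")
    case True then show ?thesis using x by simp
  next
    case False
    have m: "2*k \<in> ?A" using NN_mem1[of k d] False k by simp
    have "2 * (k - 1) = (2*k - 2) - (if 2 \<le> x \<and> x < 2*k then 1 else 0)"
      using cnt[OF m] NN_below1[of k d] False k by simp
    then have "\<not> x < 2*k" using False x by (auto split: if_splits)
    moreover have "x \<noteq> 2*k" using m xA by auto
    ultimately show ?thesis by simp
  qed
  have hi: "x \<le> 2*k+2"
  proof (cases "k \<le> d")
    case False then show ?thesis using x k by simp
  next
    case True
    have m: "2*k+3 \<in> ?A" using NN_mem2[OF True] .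
    have "2 * k = (2*k + 1) - (if 2 \<le> x \<and> x < 2*k+3 then 1 else 0)"
      using cnt[OF m] NN_below2[OF True] by simp
    then have "x < 2*k+3" using x by (auto split: if_splits)
    then show ?thesis by simp
  qed
  have "x = 2*k+1 \<or> x = 2*k+2" using lo hi by linarith
  then show ?thesis using that x U by blast
qed


lemma card_above_below:
  fixes S :: "nat set"
  assumes "finite S" "x \<in> S"
  shows "card {u\<in>S. x < u} + card {u\<in>S. u < x} + 1 = card S"
proof -
  have "S = {u\<in>S. x < u} \<union> {u\<in>S. u < x} \<union> {x}" using assms by auto
  moreover have "card ({u\<in>S. x < u} \<union> {u\<in>S. u < x} \<union> {x}) = card {u\<in>S. x < u} + card {u\<in>S. u < x} + 1"
  proof -
    have "card ({u\<in>S. x < u} \<union> {u\<in>S. u < x}) = card {u\<in>S. x < u} + card {u\<in>S. u < x}"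
      by (rule card_Un_disjoint) (use assms in auto)
    moreover have "card ({u\<in>S. x < u} \<union> {u\<in>S. u < x} \<union> {x}) = card ({u\<in>S. x < u} \<union> {u\<in>S. u < x}) + 1"
      by (subst card_Un_disjoint) (use assms in auto)
    ultimately show ?thesis by simp
  qed
  ultimately show ?thesis by simp
qed

lemma interlace_even_above:
  assumes il: "interlace X Y" and y: "y \<in> Y"
  shows "even (card {u\<in>X \<union> Y. y < u})"
proof -
  have finX: "finite X" and finY: "finite Y" and cY: "card Y = card X + 1"
    using interlace_card[OF il] by auto
  have dj: "X \<inter> Y = {}" using interlace_disj[OF il] .
  have c: "card (X \<union> Y) = 2 * card X + 1" using card_Un_disjoint[OF finX finY dj] cY by simp
  have "card {u\<in>X \<union> Y. u < y} = card {u\<in>X. u < y} + card {u\<in>Y. u < y}"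
    by (rule card_filter_Un[OF finX finY dj])
  also have "\<dots> = 2 * card {u\<in>X. u < y}" using interlace_I2[OF il y] by simp
  finally have b: "card {u\<in>X \<union> Y. u < y} = 2 * card {u\<in>X. u < y}" .
  have "card {u\<in>X \<union> Y. y < u} + card {u\<in>X \<union> Y. u < y} + 1 = card (X \<union> Y)"
    by (rule card_above_below) (use finX finY y in auto)
  then have "card {u\<in>X \<union> Y. y < u} = 2 * card X - 2 * card {u\<in>X. u < y}" using b c by simp
  then show ?thesis by simp
qed

lemma Fb_lower:
  assumes il: "interlace A B" and b: "b \<in> B" and cA: "card A = d + 1"
  shows "(A \<union> B) - {b} \<in> lower_triangulation (A \<union> B) (2*d+1)"
proof -
  have finA: "finite A" and finB: "finite B" and cB: "card B = d + 2"
    using interlace_card[OF il] cA by auto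
  have dj: "A \<inter> B = {}" using interlace_disj[OF il] .
  have c: "card (A \<union> B) = 2*d+3" using card_Un_disjoint[OF finA finB dj] cA cB by simp
  have cF: "card ((A \<union> B) - {b}) = 2*d+2" using c b finA finB by simp
  have D: "(A \<union> B) - ((A \<union> B) - {b}) = {b}" using b by auto
  have e: "{f\<in>(A \<union> B) - {b}. b < f} = {u\<in>A \<union> B. b < u}" by auto
  show ?thesis unfolding lower_triangulation_def lower_facet_def
    using cF D e interlace_even_above[OF il b] by auto
qed

lemma exclude:
  fixes t :: "nat \<Rightarrow> real"
  assumes mono: "strict_mono_on {1..2*d+4} t"
    and tri: "triangulation t {1..2*d+4} (2*d+1) T"
    and Fb: "\<And>b. b \<in> {1..2*d+4} \<Longrightarrow> b \<noteq> e \<Longrightarrow> b \<notin> NN d k \<Longrightarrow> {1..2*d+4} - {e, b} \<in> T"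
    and R: "R \<in> T" and NR: "XZ (2*d+4) z \<subseteq> R"
    and z: "z \<in> {1..2*d+4}" "z \<noteq> e" "z \<notin> NN d k" and eY: "e \<notin> YZ (2*d+4) z"
  shows False
proof (rule clashZ[OF mono tri z(1) R Fb[OF z]])
  show "XZ (2 * d + 4) z \<subseteq> R" by (fact NR)
  show "YZ (2 * d + 4) z \<subseteq> {1..2 * d + 4} - {e, z}" using eY unfolding YZ_def by auto
qed

lemma R_shape:
  assumes tri: "triangulation t {1..2*d+4} (2*d+1) T" and R: "R \<in> T"
  obtains p q where "R = {1..2*d+4} - {p, q}" "1 \<le> p" "p < q" "q \<le> 2*d+4"
proof -
  have RV: "R \<subseteq> {1..2*d+4}" and cR: "card R = Suc (2*d+1)" using tri_props[OF tri R] by auto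
  have "card ({1..2*d+4} - R) = 2" using RV cR by (simp add: card_Diff_subset finite_subset)
  then obtain p q where D: "{1..2*d+4} - R = {p, q}" and pq: "p < q" by (rule card2_sorted)
  have "R = {1..2*d+4} - {p, q}" using D RV by auto
  moreover have "1 \<le> p" "q \<le> 2*d+4" using D by auto
  ultimately show ?thesis using that pq by blast
qed

lemma lower_pq:
  assumes "1 \<le> p" "p < q" "q \<le> 2*d+4" "odd p" "even q"
  shows "lower_facet {1..2*d+4} (2*d+2) ({1..2*d+4} - {p, q})"
proof -
  let ?m = "2*d+4"
  have e: "\<And>x. {f\<in>{1..?m} - {p,q}. x < f} = {Suc x..?m} - {p,q}" by auto
  have c: "\<And>x. card ({Suc x..?m} - {p,q}) = (?m - x) - card ({p,q} \<inter> {Suc x..?m})"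
    by (rule card_above_diff) simp
  have "{p,q} \<inter> {Suc q..?m} = {}" using assms by auto
  then have cq: "card {f\<in>{1..?m} - {p,q}. q < f} = ?m - q" unfolding e c by simp
  have "{p,q} \<inter> {Suc p..?m} = {q}" using assms by auto
  then have cp: "card {f\<in>{1..?m} - {p,q}. p < f} = ?m - p - 1" unfolding e c by simp
  have cR: "card ({1..?m} - {p,q}) = 2*d+2"
  proof -
    have "card ({1..?m} - {p,q}) = card {1..?m} - card {p,q}"
      by (rule card_Diff_subset) (use assms in auto)
    then show ?thesis using assms by simp
  qed
  have D: "{1..?m} - ({1..?m} - {p,q}) = {p,q}" using assms by auto
  show ?thesis unfolding lower_facet_def D using cp cq cR assms by auto
qed

lemma all_lower:
  fixes t :: "nat \<Rightarrow> real"
  assumes mono: "strict_mono_on {1..2*d+4} t"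
    and tri: "triangulation t {1..2*d+4} (2*d+1) T"
    and cases: "(e = 1 \<and> (\<forall>b\<in>{1..2*d+4}. even b \<longrightarrow> {1..2*d+4} - {e, b} \<in> T))
              \<or> (e = 2*d+4 \<and> (\<forall>b\<in>{1..2*d+4}. odd b \<longrightarrow> {1..2*d+4} - {e, b} \<in> T))"
    and R: "R \<in> T"
  shows "lower_facet {1..2*d+4} (2*d+2) R"
proof -
  let ?m = "2*d+4"
  obtain p q where Rpq: "R = {1..?m} - {p, q}" and pq: "1 \<le> p" "p < q" "q \<le> ?m"
    using R_shape[OF tri R] by blast
  have cl: False if z: "z \<in> {1..?m}" and b: "b \<in> {1..?m}" and Fb: "{1..?m} - {e, b} \<in> T"
    and X: "e \<notin> XZ ?m z" "b \<notin> XZ ?m z" and Y: "p \<notin> YZ ?m z" "q \<notin> YZ ?m z" for z b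
  proof (rule clashZ[OF mono tri z Fb R])
    show "XZ ?m z \<subseteq> {1..?m} - {e, b}" using X unfolding XZ_def by auto
    show "YZ ?m z \<subseteq> R" using Y unfolding Rpq YZ_def by auto
  qed
  have "odd p \<and> even q"
  proof (rule ccontr)
    assume np: "\<not> (odd p \<and> even q)"
    from cases show False
    proof
      assume c1: "e = 1 \<and> (\<forall>b\<in>{1..?m}. even b \<longrightarrow> {1..?m} - {e, b} \<in> T)"
      show False
      proof (cases "even p")
        case True
        show False
        proof (cases "even q")
          case True
          show False by (rule cl[of q q]) (use c1 pq \<open>even p\<close> True in \<open>auto simp: XZ_def YZ_def\<close>)
        next
          case False
          show False by (rule cl[of q ?m]) (use c1 pq \<open>even p\<close> False in \<open>auto simp: XZ_def YZ_def\<close>)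
        qed
      next
        case False
        then have "odd q" using np by auto
        show False by (rule cl[of p ?m]) (use c1 pq False \<open>odd q\<close> in \<open>auto simp: XZ_def YZ_def\<close>)
      qed
    next
      assume c2: "e = 2*d+4 \<and> (\<forall>b\<in>{1..?m}. odd b \<longrightarrow> {1..?m} - {e, b} \<in> T)"
      show False
      proof (cases "even p")
        case True
        show False
        proof (cases "odd q")
          case True
          show False by (rule cl[of q q]) (use c2 pq \<open>even p\<close> True in \<open>auto simp: XZ_def YZ_def\<close>)
        next
          case False
          show False by (rule cl[of q 1]) (use c2 pq \<open>even p\<close> False in \<open>auto simp: XZ_def YZ_def\<close>)
        qed
      next
        case False
        then have "odd q" using np by auto
        show False by (rule cl[of p p]) (use c2 pq False \<open>odd q\<close> in \<open>auto simp: XZ_def YZ_def\<close>)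
      qed
    qed
  qed
  then show ?thesis unfolding Rpq using lower_pq pq by blast
qed

lemma lower_in_T:
  fixes t :: "nat \<Rightarrow> real"
  assumes mono: "strict_mono_on {1..2*d+4} t"
    and tri: "triangulation t {1..2*d+4} (2*d+1) T"
    and allL: "\<forall>R\<in>T. lower_facet {1..2*d+4} (2*d+2) R"
    and R0: "lower_facet {1..2*d+4} (2*d+2) R0"
  shows "R0 \<in> T"
proof -
  let ?V = "{1..2*d+4}"
  have R0V: "R0 \<subseteq> ?V" and cR0: "card R0 = Suc (2*d+1)"
    and ev0: "\<forall>w\<in>?V - R0. even (card {r\<in>R0. w < r})"
    using R0 unfolding lower_facet_def by auto
  have finR0: "finite R0" using R0V finite_subset by blast
  define l :: "nat \<Rightarrow> real" where "l = (\<lambda>v. 1 / real (2*d+2))"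
  have lpos: "\<forall>v\<in>R0. 0 < l v" unfolding l_def by simp
  have sl: "sum l R0 = 1" unfolding l_def using cR0 by simp
  define x where "x = (\<lambda>k. \<Sum>v\<in>R0. l v * cpt t (2*d+1) v k)"
  have "x \<in> conv t (2*d+1) ?V" unfolding x_def
    by (rule conv_ext) (use R0V lpos sl in \<open>auto simp: less_imp_le\<close>)
  then have "x \<in> (\<Union>S\<in>T. conv t (2*d+1) S)" using tri unfolding triangulation_def by blast
  then obtain S where S: "S \<in> T" and xS: "x \<in> conv t (2*d+1) S" by blast
  obtain \<mu> where mpos: "\<forall>v\<in>S. 0 \<le> \<mu> v" and sm: "sum \<mu> S = 1"
    and eq: "x = (\<lambda>k. \<Sum>v\<in>S. \<mu> v * cpt t (2*d+1) v k)"
    using xS unfolding conv_def by blast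
  have SL: "lower_facet ?V (2*d+2) S" using allL S by blast
  have SV: "S \<subseteq> ?V" and cS: "card S = Suc (2*d+1)"
    and evS: "\<forall>w\<in>?V - S. even (card {r\<in>S. w < r})"
    using SL unfolding lower_facet_def by auto
  have finS: "finite S" using SV finite_subset by blast
  have "R0 \<subseteq> S"
    by (rule lift_sub[OF mono R0V SV finR0 finS cR0 cS ev0 evS lpos sl mpos sm])
       (use eq x_def in simp)
  then have "R0 = S" using card_subset_eq[OF finS] cR0 cS by simp
  then show ?thesis using S by simp
qed


theorem lemma3p8:
  fixes d :: nat and t :: "nat \<Rightarrow> real" and T :: "nat set set"
    and A \<Sigma> :: "nat set"
  assumes t_mono: "strict_mono_on {1..2 * d + 4} t"
    and tri: "triangulation t {1..2 * d + 4} (2 * d + 1) T"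
    and not_up: "T \<noteq> upper_triangulation {1..2 * d + 4} (2 * d + 1)"
    and not_low: "T \<noteq> lower_triangulation {1..2 * d + 4} (2 * d + 1)"
    and A_mut: "mutable (2 * d + 4) d T A"
    and A_unique: "\<forall>A'. mutable (2 * d + 4) d T A' \<longrightarrow> A' = A"
    and \<Sigma>_supp: "support (2 * d + 4) d (simp (2 * d + 4) d T) A \<Sigma>"
    and \<Sigma>_unique: "\<forall>\<Sigma>'. support (2 * d + 4) d (simp (2 * d + 4) d T) A \<Sigma>' \<longrightarrow> \<Sigma>' = \<Sigma>"
  shows "\<forall>A' \<in> simp (2 * d + 4) d T. A' \<subseteq> A \<union> \<Sigma>"
proof -
  let ?m = "2*d+4"
  have Asimp: "A \<in> simp ?m d T" and "\<exists>B. B \<subseteq> {1..?m} \<and> card B = d + 2 \<and> interlace A B \<and>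
          {S\<in>T. S \<subseteq> A \<union> B} = lower_triangulation (A \<union> B) (2 * d + 1)"
    using A_mut unfolding mutable_def by auto
  then obtain B where BV: "B \<subseteq> {1..?m}" and ilB: "interlace A B"
    and LB: "{S\<in>T. S \<subseteq> A \<union> B} = lower_triangulation (A \<union> B) (2 * d + 1)" by blast
  have "A \<in> nu ?m d" using Asimp unfolding simp_def by auto
  then obtain k where k: "k \<le> d + 1" and Ak: "A = NN d k" using nu_N by blast
  have cA: "card A = d + 1" using Ak card_NN[OF k] by simp
  have ilB': "interlace (NN d k) B" using ilB Ak by simp
  obtain e where e: "e \<in> {1..?m}" "e = 2*k+1 \<or> e = 2*k+2" and U0: "NN d k \<union> B = {1..?m} - {e}"
    by (rule B_struct[OF k ilB' BV])
  have U: "A \<union> B = {1..?m} - {e}" using U0 Ak by simp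
  have Fb: "{1..?m} - {e, b} \<in> T" if b: "b \<in> {1..?m}" "b \<noteq> e" "b \<notin> NN d k" for b
  proof -
    have "b \<in> NN d k \<union> B" using U0 b by blast
    then have bB: "b \<in> B" using b(3) by blast
    have "(A \<union> B) - {b} \<in> {S\<in>T. S \<subseteq> A \<union> B}" using Fb_lower[OF ilB bB cA] LB by blast
    then have "(A \<union> B) - {b} \<in> T" by blast
    moreover have "(A \<union> B) - {b} = {1..?m} - {e, b}" unfolding U by blast
    ultimately show ?thesis by simp
  qed
  have Sp: "\<Sigma> \<subseteq> {1..?m}" "interlace \<Sigma> A" and supp: "\<forall>C\<in>nu ?m d. C \<subseteq> A \<union> \<Sigma> \<longrightarrow> C \<in> simp ?m d T"
    using \<Sigma>_supp unfolding support_def by auto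
  have ilS': "interlace \<Sigma> (NN d k)" using Sp(2) Ak by simp
  obtain x where x: "x \<in> {2..2*d+3}" "x = 2*k+1 \<or> x = 2*k+2" and US0: "NN d k \<union> \<Sigma> = {2..2*d+3} - {x}"
    by (rule S_struct[OF k ilS'])
  have US: "A \<union> \<Sigma> = {2..2*d+3} - {x}" using US0 Ak by simp
  have simpR: "\<exists>l\<le>d+1. A' = NN d l \<and> (\<exists>R\<in>T. NN d l \<subseteq> R)" if "A' \<in> simp ?m d T" for A'
  proof -
    have "A' \<in> nu ?m d" "\<exists>R\<in>T. A' \<subseteq> R" using that unfolding simp_def by auto
    then obtain R where R: "R \<in> T" "A' \<subseteq> R" by blast
    obtain l where "l \<le> d + 1" "A' = NN d l" using nu_N[OF \<open>A' \<in> nu ?m d\<close>] by blast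
    then show ?thesis using R by blast
  qed
  have excl_up: False if "e = 2*k+2" "k < l" "l \<le> d+1" "R \<in> T" "NN d l \<subseteq> R" for l R
  proof (rule exclude[OF t_mono tri Fb _ _ _ _ _])
    show "R \<in> T" by fact
    show "XZ ?m (2*l+2) \<subseteq> R" using XZ_N2[of l d] that by simp
    show "2*l+2 \<in> {1..?m}" "2*l+2 \<noteq> e" using that by auto
    show "2*l+2 \<notin> NN d k" using that unfolding NN_def by auto
    show "e \<notin> YZ ?m (2*l+2)" using that unfolding YZ_def by auto
  qed
  have excl_down: False if "e = 2*k+1" "l < k" "R \<in> T" "NN d l \<subseteq> R" for l R
  proof (rule exclude[OF t_mono tri Fb _ _ _ _ _])
    show "R \<in> T" by fact
    show "XZ ?m (2*l+1) \<subseteq> R" using XZ_N1[of l d] that k by simp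
    show "2*l+1 \<in> {1..?m}" "2*l+1 \<noteq> e" using that k by auto
    show "2*l+1 \<notin> NN d k" using that unfolding NN_def by auto
    show "e \<notin> YZ ?m (2*l+1)" using that unfolding YZ_def by auto
  qed
  have lowcase: False if lc: "(e = 1 \<and> (\<forall>b\<in>{1..?m}. even b \<longrightarrow> {1..?m} - {e, b} \<in> T))
              \<or> (e = ?m \<and> (\<forall>b\<in>{1..?m}. odd b \<longrightarrow> {1..?m} - {e, b} \<in> T))"
  proof -
    have allL: "\<forall>R\<in>T. lower_facet {1..?m} (2*d+2) R"
      using all_lower[OF t_mono tri lc] by blast
    have "T = lower_triangulation {1..?m} (2*d+1)"
      unfolding lower_triangulation_def
      using allL lower_in_T[OF t_mono tri allL] by auto
    then show False using not_low by simp
  qed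
  show ?thesis
  proof (cases "e = 1")
    case True
    then have "k = 0" using e by auto
    have "\<forall>b\<in>{1..?m}. even b \<longrightarrow> {1..?m} - {e, b} \<in> T"
    proof (intro ballI impI)
      fix b assume b: "b \<in> {1..?m}" "even b"
      show "{1..?m} - {e, b} \<in> T" by (rule Fb) (use b True \<open>k = 0\<close> in \<open>auto simp: NN_def\<close>)
    qed
    then show ?thesis using lowcase True by blast
  next
    case ne1: False
    show ?thesis
    proof (cases "e = ?m")
      case True
      then have "k = d + 1" using e by auto
      have "\<forall>b\<in>{1..?m}. odd b \<longrightarrow> {1..?m} - {e, b} \<in> T"
      proof (intro ballI impI)
        fix b assume b: "b \<in> {1..?m}" "odd b"
        show "{1..?m} - {e, b} \<in> T" by (rule Fb) (use b True \<open>k = d + 1\<close> in \<open>auto simp: NN_def\<close>)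
      qed
      then show ?thesis using lowcase True by blast
    next
      case nem: False
      show ?thesis
      proof (cases "e = 2*k+2")
        case eup: True
        have kd: "k \<le> d" using eup nem k by auto
        show ?thesis
        proof (cases "x = 2*k+2")
          case True
          show ?thesis
          proof
            fix A' assume A': "A' \<in> simp ?m d T"
            then obtain l R where l: "l \<le> d+1" "A' = NN d l" "R \<in> T" "NN d l \<subseteq> R" using simpR by blast
            have "l \<le> k"
            proof (rule ccontr)
              assume "\<not> l \<le> k"
              then show False using excl_up[OF eup _ l(1) l(3) l(4)] by simp
            qed
            then have "x \<notin> NN d l" using True unfolding NN_def by simp
            then have "NN d l \<subseteq> {2..2*d+3} - {x}" using NN_sub2[of d l] by blast
            then show "A' \<subseteq> A \<union> \<Sigma>" using US l by simp
          qed
        next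
          case False
          then have x1: "x = 2*k+1" using x by auto
          have "NN d (d+1) \<subseteq> A \<union> \<Sigma>" unfolding US x1 NN_def by auto
          then have "NN d (d+1) \<in> simp ?m d T" using supp N_nu[of "d+1" d] by simp
          then obtain R where "R \<in> T" "NN d (d+1) \<subseteq> R" unfolding simp_def by auto
          then have False using excl_up[OF eup _ _ \<open>R \<in> T\<close>, of "d+1"] kd by simp
          then show ?thesis ..
        qed
      next
        case edn: False
        then have edn: "e = 2*k+1" using e by auto
        have k1: "1 \<le> k" using edn ne1 by auto
        show ?thesis
        proof (cases "x = 2*k+1")
          case True
          show ?thesis
          proof
            fix A' assume A': "A' \<in> simp ?m d T"
            then obtain l R where l: "l \<le> d+1" "A' = NN d l" "R \<in> T" "NN d l \<subseteq> R" using simpR by blast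
            have "k \<le> l"
            proof (rule ccontr)
              assume "\<not> k \<le> l"
              then show False using excl_down[OF edn _ l(3) l(4)] by simp
            qed
            then have "x \<notin> NN d l" using True unfolding NN_def by simp
            then have "NN d l \<subseteq> {2..2*d+3} - {x}" using NN_sub2[of d l] by blast
            then show "A' \<subseteq> A \<union> \<Sigma>" using US l by simp
          qed
        next
          case False
          then have x2: "x = 2*k+2" using x by auto
          have "NN d 0 \<subseteq> A \<union> \<Sigma>" unfolding US x2 NN_def by auto
          then have "NN d 0 \<in> simp ?m d T" using supp N_nu[of 0 d] by simp
          then obtain R where "R \<in> T" "NN d 0 \<subseteq> R" unfolding simp_def by auto
          then have False using excl_down[OF edn _ \<open>R \<in> T\<close>, of 0] k1 by simp
          then show ?thesis ..
        qed
      qed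
    qed
  qed
qed

end
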